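(* Let $u,v\in U^I_{\min}$. If a monomial $\Lambda^l=\Lambda_1^{l_1}\cdots\Lambda_N^{l_N}$ ($l\in\mathbb{Z}^N$) appears with nonzero coefficient in the Laurent polynomial $D^I_{uv}(\Lambda)$, then $l\in L_u$.
   Context: $p$ prime, $n\ge1$, $d\ge2$, $I\subseteq\{0,\dots,n\}$; ${\bf a}_1,\dots,{\bf a}_N\in\mathbb{N}^{n+1}$ with coordinate sums $d$, ${\bf a}_j^+=({\bf a}_j,1)\in\mathbb{N}^{n+2}$. $\mu_I$: $\lceil|I|/d\rceil=\mu_I+1$. $U^I_{\min}$: the set of $u\in\mathbb{N}^{n+2}$ with $\sum_{i=0}^nu_i=du_{n+1}$, $u_i>0$ for $i\in I$, and $u_{n+1}=\mu_I+1$. Hypothesis: $N\ge\mu_I+|U^I_{\min}|$ and for each $u\in U^I_{\min}$ there is $k_u$, $1\le k_u\le|U^I_{\min}|$, with $u={\bf a}^+_{\mu_I+k_u}+\sum_{j=1}^{\mu_I}{\bf a}_j^+$. Define $A^I_{uv}(\Lambda)=(-1)^{\mu_I+1}\sum_{\nu\in\mathbb{N}^N,\ \sum_j\nu_j{\bf a}_j^+=pu-v}\Lambda^\nu/(\nu_1!\cdots\nu_N!)$ and $$D^I_{uv}(\Lambda)=\Big(\prod_{j=1}^{\mu_I}\Lambda_j\Big)^{-(p-1)}\Lambda_{\mu_I+k_u}^{-p}\Lambda_{\mu_I+k_v}A^I_{uv}(\Lambda).$$ $L_u$ is the set of $l\in\mathbb{Z}^N$ with $\sum_{k=1}^Nl_k{\bf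 a}_k^+={\bf 0}$, $l_j\le0$ for $j=1,\dots,\mu_I$ and $j=\mu_I+k_u$, and $l_j\ge0$ otherwise. *)

theory Defs
  imports Complex_Main "HOL-Library.Poly_Mapping" "HOL-Computational_Algebra.Primes"
begin

text \<open>Laurent polynomials in variables Lambda_1,...,Lambda_N with rational coefficients:
  finitely supported maps from integer exponent vectors (finitely supported nat => int)
  to rat; multiplication is the convolution product of Poly_Mapping.\<close>
type_synonym laurent = "(nat \<Rightarrow>\<^sub>0 int) \<Rightarrow>\<^sub>0 rat"

definition Lvar :: "nat \<Rightarrow> int \<Rightarrow> laurent" where
  "Lvar j e = Poly_Mapping.single (Poly_Mapping.single j e) 1"

definition Lconst :: "rat \<Rightarrow> laurent" where
  "Lconst c = Poly_Mapping.single 0 c"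

definition aplus :: "(nat \<Rightarrow> nat \<Rightarrow> nat) \<Rightarrow> nat \<Rightarrow> nat \<Rightarrow> nat \<Rightarrow> nat" where
  "aplus a n j i = (if i \<le> n then a j i else if i = Suc n then 1 else 0)"

definition Umin :: "nat \<Rightarrow> nat \<Rightarrow> nat set \<Rightarrow> nat \<Rightarrow> (nat \<Rightarrow> nat) set" where
  "Umin n d I mu = {u. (\<forall>i > Suc n. u i = 0) \<and> (\<Sum>i\<le>n. u i) = d * u (Suc n)
                       \<and> (\<forall>i\<in>I. u i > 0) \<and> u (Suc n) = mu + 1}"

definition Acoef :: "nat \<Rightarrow> nat \<Rightarrow> nat \<Rightarrow> (nat \<Rightarrow> nat \<Rightarrow> nat) \<Rightarrow> nat \<Rightarrow>
                     (nat \<Rightarrow> nat) \<Rightarrow> (nat \<Rightarrow> nat) \<Rightarrow> laurent" where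
  "Acoef p n N a mu u v =
     Lconst ((-1) ^ (mu + 1)) *
     (\<Sum>\<nu> \<in> {\<nu> :: nat \<Rightarrow> nat. (\<forall>j. j \<notin> {1..N} \<longrightarrow> \<nu> j = 0) \<and>
               (\<forall>i \<le> Suc n. int (\<Sum>j=1..N. \<nu> j * aplus a n j i) = int p * int (u i) - int (v i))}.
        Lconst (1 / (\<Prod>j=1..N. fact (\<nu> j))) * (\<Prod>j=1..N. Lvar j (int (\<nu> j))))"

definition Dcoef :: "nat \<Rightarrow> nat \<Rightarrow> nat \<Rightarrow> (nat \<Rightarrow> nat \<Rightarrow> nat) \<Rightarrow> nat \<Rightarrow> ((nat \<Rightarrow> nat) \<Rightarrow> nat) \<Rightarrow>
                     (nat \<Rightarrow> nat) \<Rightarrow> (nat \<Rightarrow> nat) \<Rightarrow> laurent" where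
  "Dcoef p n N a mu k u v =
     (\<Prod>j=1..mu. Lvar j (- (int p - 1))) * Lvar (mu + k u) (- int p) * Lvar (mu + k v) 1
       * Acoef p n N a mu u v"

definition Lset :: "nat \<Rightarrow> nat \<Rightarrow> (nat \<Rightarrow> nat \<Rightarrow> nat) \<Rightarrow> nat \<Rightarrow> ((nat \<Rightarrow> nat) \<Rightarrow> nat) \<Rightarrow>
                    (nat \<Rightarrow> nat) \<Rightarrow> (nat \<Rightarrow>\<^sub>0 int) set" where
  "Lset n N a mu k u = {l. Poly_Mapping.keys l \<subseteq> {1..N} \<and>
      (\<forall>i \<le> Suc n. (\<Sum>j=1..N. Poly_Mapping.lookup l j * int (aplus a n j i)) = 0) \<and>
      (\<forall>j\<in>{1..N}. (if j \<le> mu \<or> j = mu + k u then Poly_Mapping.lookup l j \<le> 0 else Poly_Mapping.lookup l j \<ge> 0))}"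

end

theory Submission imports Defs begin

lemma keys_Lvar: "Poly_Mapping.keys (Lvar j e) \<subseteq> {Poly_Mapping.single j e}"
  by (simp add: Lvar_def)

lemma keys_Lconst: "Poly_Mapping.keys (Lconst c) \<subseteq> {0}"
  by (simp add: Lconst_def)

lemma keys_mult_single:
  assumes "Poly_Mapping.keys (f::laurent) \<subseteq> {x}" "Poly_Mapping.keys g \<subseteq> G"
  shows "Poly_Mapping.keys (f * g) \<subseteq> (\<lambda>b. x + b) ` G"
  using keys_mult[of f g] assms by blast

lemma keys_prodL:
  "finite A \<Longrightarrow> Poly_Mapping.keys (\<Prod>j\<in>A. Lvar j (e j)) \<subseteq> {\<Sum>j\<in>A. Poly_Mapping.single j (e j)}"
proof (induction A rule: finite_induct)
  case empty
  then show ?case by simp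
next
  case (insert x F)
  have "Poly_Mapping.keys (Lvar x (e x) * (\<Prod>j\<in>F. Lvar j (e j))) \<subseteq>
        (\<lambda>b. Poly_Mapping.single x (e x) + b) ` {\<Sum>j\<in>F. Poly_Mapping.single j (e j)}"
    by (rule keys_mult_single[OF keys_Lvar insert.IH])
  then show ?case using insert by simp
qed

lemma keys_sum_sub: "Poly_Mapping.keys (sum (b::_ \<Rightarrow> laurent) S) \<subseteq> (\<Union>i\<in>S. Poly_Mapping.keys (b i))"
  by (rule keys_sum)

lemma keys_mult_zero:
  assumes "Poly_Mapping.keys (f::laurent) \<subseteq> {0}" "Poly_Mapping.keys g \<subseteq> G"
  shows "Poly_Mapping.keys (f * g) \<subseteq> G"
  using keys_mult_single[OF assms] by simp

lemma keys_D:
  assumes "l \<in> Poly_Mapping.keys (Dcoef p n N a mu k u v)"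
  obtains \<nu> where "(\<forall>j. j \<notin> {1..N} \<longrightarrow> \<nu> j = 0)"
    "\<forall>i \<le> Suc n. int (\<Sum>j=1..N. \<nu> j * aplus a n j i) = int p * int (u i) - int (v i)"
    "l = (\<Sum>j=1..mu. Poly_Mapping.single j (- (int p - 1))) + Poly_Mapping.single (mu + k u) (- int p)
         + Poly_Mapping.single (mu + k v) 1 + (\<Sum>j=1..N. Poly_Mapping.single j (int (\<nu> j)))"
proof -
  let ?S = "{\<nu> :: nat \<Rightarrow> nat. (\<forall>j. j \<notin> {1..N} \<longrightarrow> \<nu> j = 0) \<and>
               (\<forall>i \<le> Suc n. int (\<Sum>j=1..N. \<nu> j * aplus a n j i) = int p * int (u i) - int (v i))}"
  let ?f = "\<lambda>\<nu>. Lconst (1 / (\<Prod>j=1..N. fact (\<nu> j))) * (\<Prod>j=1..N. Lvar j (int (\<nu> j)))"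
  let ?E = "\<lambda>\<nu>::nat\<Rightarrow>nat. \<Sum>j=1..N. Poly_Mapping.single j (int (\<nu> j))"
  let ?P = "(\<Sum>j=1..mu. Poly_Mapping.single j (- (int p - 1))) + Poly_Mapping.single (mu + k u) (- int p) + Poly_Mapping.single (mu + k v) 1"
  have k1: "Poly_Mapping.keys (?f \<nu>) \<subseteq> {?E \<nu>}" for \<nu>
    by (rule keys_mult_zero[OF keys_Lconst keys_prodL]) simp
  have k2: "Poly_Mapping.keys (sum ?f ?S) \<subseteq> ?E ` ?S"
    using keys_sum_sub[of ?f ?S] k1 by blast
  have k3: "Poly_Mapping.keys (Acoef p n N a mu u v) \<subseteq> ?E ` ?S"
    unfolding Acoef_def by (rule keys_mult_zero[OF keys_Lconst k2])
  have kP: "Poly_Mapping.keys (\<Prod>j=1..mu. Lvar j (- (int p - 1))) \<subseteq> {\<Sum>j=1..mu. Poly_Mapping.single j (- (int p - 1))}"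
    using keys_prodL[of "{1..mu}" "\<lambda>_. - (int p - 1)"] by simp
  have kP2: "Poly_Mapping.keys ((\<Prod>j=1..mu. Lvar j (- (int p - 1))) * Lvar (mu + k u) (- int p))
     \<subseteq> {(\<Sum>j=1..mu. Poly_Mapping.single j (- (int p - 1))) + Poly_Mapping.single (mu + k u) (- int p)}"
    using keys_mult_single[OF kP keys_Lvar[of "mu + k u" "- int p"]] by simp
  have kP3: "Poly_Mapping.keys ((\<Prod>j=1..mu. Lvar j (- (int p - 1))) * Lvar (mu + k u) (- int p) * Lvar (mu + k v) 1)
     \<subseteq> {?P}"
    using keys_mult_single[OF kP2 keys_Lvar[of "mu + k v" 1]] by simp
  have "Poly_Mapping.keys (Dcoef p n N a mu k u v) \<subseteq> (\<lambda>b. ?P + b) ` (?E ` ?S)"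
    unfolding Dcoef_def by (rule keys_mult_single[OF kP3 k3])
  with assms obtain \<nu> where "\<nu> \<in> ?S" "l = ?P + ?E \<nu>"
    by blast
  then show ?thesis using that by blast
qed

lemma lookup_sum_single:
  "finite A \<Longrightarrow> Poly_Mapping.lookup (\<Sum>j'\<in>A. Poly_Mapping.single j' (e j')) j = (if j \<in> A then (e j :: int) else 0)"
  by (simp add: lookup_sum lookup_single when_def sum.delta)

lemma keyfact:
  fixes p n d N mu :: nat and I :: "nat set" and a :: "nat \<Rightarrow> nat \<Rightarrow> nat" and u v \<nu> :: "nat \<Rightarrow> nat"
  assumes "I \<subseteq> {0..n}" and "d * mu < card I"
    and "j0 \<in> {1..N}" and "\<forall>i\<le>n. a j0 i \<le> u i" and "(\<Sum>i\<le>n. a j0 i) = d"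
    and "u \<in> Umin n d I mu" and "v \<in> Umin n d I mu"
    and "\<forall>i \<le> Suc n. int (\<Sum>j=1..N. \<nu> j * aplus a n j i) = int p * int (u i) - int (v i)"
  shows "\<nu> j0 < p"
proof -
  have su: "(\<Sum>i\<le>n. u i) = d * (mu + 1)" and uI: "\<forall>i\<in>I. u i > 0" and vI: "\<forall>i\<in>I. v i > 0"
    using assms(6,7) unfolding Umin_def by auto
  have "\<exists>i\<in>I. u i = a j0 i"
  proof (rule ccontr)
    assume H: "\<not> ?thesis"
    have ge: "\<forall>i\<in>I. 1 \<le> u i - a j0 i"
    proof
      fix i assume "i \<in> I"
      then have "i \<le> n" "u i \<noteq> a j0 i" using assms(1) H by auto
      then show "1 \<le> u i - a j0 i" using assms(4) proof - have "a j0 i \<le> u i" using assms(4) \<open>i \<le> n\<close> by simp thus ?thesis using \<open>u i \<noteq> a j0 i\<close> by linarith qed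
    qed
    have "card I = (\<Sum>i\<in>I. 1)" by simp
    also have "\<dots> \<le> (\<Sum>i\<in>I. u i - a j0 i)" by (rule sum_mono) (use ge in auto)
    also have "\<dots> \<le> (\<Sum>i\<le>n. u i - a j0 i)" by (rule sum_mono2) (use assms(1) in auto)
    also have "(\<Sum>i\<le>n. u i - a j0 i) + (\<Sum>i\<le>n. a j0 i) = (\<Sum>i\<le>n. u i)"
      by (subst sum.distrib[symmetric]) (rule sum.cong, use assms(4) in auto)
    then have "(\<Sum>i\<le>n. u i - a j0 i) = d * mu" using su assms(5) by simp
    finally show False using assms(2) by simp
  qed
  then obtain i where iI: "i \<in> I" and ui: "u i = a j0 i" by blast
  have iN: "i \<le> n" using iI assms(1) by auto
  have "\<nu> j0 * aplus a n j0 i \<le> (\<Sum>j=1..N. \<nu> j * aplus a n j i)"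
    by (rule member_le_sum) (use assms(3) in auto)
  moreover have "aplus a n j0 i = u i" using iN ui by (simp add: aplus_def)
  moreover have "int (\<Sum>j=1..N. \<nu> j * aplus a n j i) = int p * int (u i) - int (v i)"
    using assms(8) iN by simp
  ultimately have "int (\<nu> j0 * u i) \<le> int p * int (u i) - int (v i)"
    by (metis of_nat_le_iff)
  moreover have "int (v i) > 0" using vI iI by simp
  ultimately have "int (\<nu> j0) * int (u i) < int p * int (u i)" by simp
  moreover have "int (u i) > 0" using uI iI by simp
  ultimately have "int (\<nu> j0) < int p" by (simp add: mult_less_cancel_right)
  then show ?thesis by simp
qed

lemma sum_calc:
  fixes c1 c2 :: int and w x :: "nat \<Rightarrow> int"
  assumes "finite A" "{1..mu} \<subseteq> A" "cu \<in> A" "cv \<in> A"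
  shows "(\<Sum>j\<in>A. ((if j \<in> {1..mu} then c1 else 0) + (if j = cu then c2 else 0) + (if j = cv then 1 else 0) + w j) * x j)
     = c1 * (\<Sum>j=1..mu. x j) + c2 * x cu + x cv + (\<Sum>j\<in>A. w j * x j)"
proof -
  have e1: "(\<Sum>j\<in>A. (if j \<in> {1..mu} then c1 else 0) * x j) = c1 * (\<Sum>j=1..mu. x j)"
  proof -
    have "(\<Sum>j\<in>A. (if j \<in> {1..mu} then c1 else 0) * x j) = (\<Sum>j\<in>A. if j \<in> {1..mu} then c1 * x j else 0)"
      by (rule sum.cong) auto
    also have "\<dots> = (\<Sum>j\<in>A \<inter> {1..mu}. c1 * x j)" by (rule sum.inter_restrict[symmetric]) (rule assms(1))
    also have "A \<inter> {1..mu} = {1..mu}" using assms(2) by auto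
    finally show ?thesis by (simp add: sum_distrib_left)
  qed
  have e2: "(\<Sum>j\<in>A. (if j = c then c' else 0) * x j) = c' * x c" if "c \<in> A" for c c'
  proof -
    have "(\<Sum>j\<in>A. (if j = c then c' else 0) * x j) = (\<Sum>j\<in>A. if j = c then c' * x j else 0)"
      by (rule sum.cong) auto
    also have "\<dots> = c' * x c" using that assms(1) by (simp add: sum.delta')
    finally show ?thesis .
  qed
  show ?thesis
    by (simp only: distrib_right sum.distrib e1 e2[OF assms(3)] e2[OF assms(4), of 1])
qed

theorem lemma7p5:
  fixes p n d N mu :: nat and I :: "nat set" and a :: "nat \<Rightarrow> nat \<Rightarrow> nat"
    and k :: "(nat \<Rightarrow> nat) \<Rightarrow> nat" and u v :: "nat \<Rightarrow> nat" and l :: "nat \<Rightarrow>\<^sub>0 int"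
  assumes "prime p" and "n \<ge> 1" and "d \<ge> 2" and "I \<subseteq> {0..n}"
    and "\<forall>j\<in>{1..N}. (\<Sum>i\<le>n. a j i) = d"
    and "\<lceil>real (card I) / real d\<rceil> = int mu + 1"
    and "N \<ge> mu + card (Umin n d I mu)"
    and "\<forall>w\<in>Umin n d I mu. 1 \<le> k w \<and> k w \<le> card (Umin n d I mu) \<and>
           w = (\<lambda>i. aplus a n (mu + k w) i + (\<Sum>j=1..mu. aplus a n j i))"
    and "u \<in> Umin n d I mu" and "v \<in> Umin n d I mu"
    and "Poly_Mapping.lookup (Dcoef p n N a mu k u v) l \<noteq> 0"
  shows "l \<in> Lset n N a mu k u"
proof -
  have "l \<in> Poly_Mapping.keys (Dcoef p n N a mu k u v)" using assms(11) by (simp add: in_keys_iff)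
  then obtain \<nu> where nu0: "\<forall>j. j \<notin> {1..N} \<longrightarrow> \<nu> j = 0"
    and nueq: "\<forall>i \<le> Suc n. int (\<Sum>j=1..N. \<nu> j * aplus a n j i) = int p * int (u i) - int (v i)"
    and leq: "l = (\<Sum>j=1..mu. Poly_Mapping.single j (- (int p - 1))) + Poly_Mapping.single (mu + k u) (- int p)
         + Poly_Mapping.single (mu + k v) 1 + (\<Sum>j=1..N. Poly_Mapping.single j (int (\<nu> j)))"
    by (rule keys_D)
  define C where "C = card (Umin n d I mu)"
  have ku: "1 \<le> k u" "k u \<le> C" and uf: "u = (\<lambda>i. aplus a n (mu + k u) i + (\<Sum>j=1..mu. aplus a n j i))"
    using assms(8,9) unfolding C_def by auto
  have kv: "1 \<le> k v" "k v \<le> C" and vf: "v = (\<lambda>i. aplus a n (mu + k v) i + (\<Sum>j=1..mu. aplus a n j i))"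
    using assms(8,10) unfolding C_def by auto
  have NC: "mu + C \<le> N" using assms(7) unfolding C_def by simp
  have lk: "Poly_Mapping.lookup l j = (if j \<in> {1..mu} then - (int p - 1) else 0) + (if j = mu + k u then - int p else 0)
      + (if j = mu + k v then 1 else 0) + int (\<nu> j)" for j
  proof -
    have "Poly_Mapping.lookup (\<Sum>j=1..N. Poly_Mapping.single j (int (\<nu> j))) j = int (\<nu> j)"
      using nu0 by (simp add: lookup_sum_single)
    then show ?thesis unfolding leq
      by (simp add: lookup_add lookup_sum_single lookup_single when_def)
  qed
  have dpos: "real d > 0" using assms(3) by simp
  have "real mu < real (card I) / real d" using assms(6) by linarith
  then have "real (d * mu) < real (card I)" using dpos by (simp add: field_simps)
  then have cI: "d * mu < card I" by linarith
  have key: "\<nu> j0 < p" if "j0 \<in> {1..N}" "\<forall>i\<le>n. a j0 i \<le> u i" for j0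
    by (rule keyfact[OF assms(4) cI that(1) that(2) _ assms(9) assms(10) nueq]) (use assms(5) that(1) in auto)
  have p1: "int p \<ge> 1" using assms(1) prime_ge_1_nat by simp
  show ?thesis
    unfolding Lset_def
  proof (intro CollectI conjI allI impI ballI)
    show "Poly_Mapping.keys l \<subseteq> {1..N}"
    proof
      fix j assume "j \<in> Poly_Mapping.keys l"
      then have "Poly_Mapping.lookup l j \<noteq> 0" by (simp add: in_keys_iff)
      then show "j \<in> {1..N}" using lk[of j] nu0 ku kv NC by (auto split: if_splits)
    qed
  next
    fix i assume iN: "i \<le> Suc n"
    have "(\<Sum>j=1..N. Poly_Mapping.lookup l j * int (aplus a n j i))
       = (- (int p - 1)) * (\<Sum>j=1..mu. int (aplus a n j i)) + (- int p) * int (aplus a n (mu + k u) i)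
         + int (aplus a n (mu + k v) i) + (\<Sum>j=1..N. int (\<nu> j) * int (aplus a n j i))"
      unfolding lk by (rule sum_calc) (use ku kv NC in auto)
    also have "(\<Sum>j=1..N. int (\<nu> j) * int (aplus a n j i)) = int p * int (u i) - int (v i)"
      using nueq iN by simp
    also have "int (u i) = int (aplus a n (mu + k u) i) + (\<Sum>j=1..mu. int (aplus a n j i))"
      by (subst uf) simp
    also have "int (v i) = int (aplus a n (mu + k v) i) + (\<Sum>j=1..mu. int (aplus a n j i))"
      by (subst vf) simp
    finally show "(\<Sum>j=1..N. Poly_Mapping.lookup l j * int (aplus a n j i)) = 0"
      by (simp add: algebra_simps)
  next
    fix j assume jN: "j \<in> {1..N}"
    show "if j \<le> mu \<or> j = mu + k u then Poly_Mapping.lookup l j \<le> 0 else Poly_Mapping.lookup l j \<ge> 0"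
    proof (cases "j \<le> mu")
      case True
      have le: "\<forall>i\<le>n. a j i \<le> u i"
      proof (intro allI impI)
        fix i assume "i \<le> n"
        have "aplus a n j i \<le> (\<Sum>j=1..mu. aplus a n j i)"
          by (rule member_le_sum) (use True jN in auto)
        then have "aplus a n j i \<le> u i" by (subst uf) simp
        then show "a j i \<le> u i" using \<open>i \<le> n\<close> by (simp add: aplus_def)
      qed
      have "\<nu> j < p" by (rule key[OF jN le])
      then show ?thesis using True jN ku kv lk[of j] by auto
    next
      case False
      show ?thesis
      proof (cases "j = mu + k u")
        case True
        have le: "\<forall>i\<le>n. a j i \<le> u i"
        proof (intro allI impI)
          fix i assume "i \<le> n"
          have "aplus a n j i \<le> u i" using True by (subst uf) simp
          then show "a j i \<le> u i" using \<open>i \<le> n\<close> by (simp add: aplus_def)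
        qed
        have "\<nu> j < p" by (rule key[OF jN le])
        then show ?thesis using True ku lk[of j] by auto
      next
        case F2: False
        then show ?thesis using False lk[of j] by auto
      qed
    qed
  qed
qed

end
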